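(* Fix $b\in\mathbb{N}$ and integers $M\ge2$, $N\ge2$. Let $P$ be the $b$-pattern on the rectangle with vertices $(1,1),(M,1),(M,N),(1,N)$ in which every boundary point (i.e. every point of $\{(1,s),(M,s),(r,1),(r,N): 1\le r\le M,\ 1\le s\le N\}$) is a circle and every interior point $(r,s)$ with $1<r<M$, $1<s<N$ is a cross. For $b=1$, $P$ is realizable in $L$ if and only if $M$ and $N$ are both odd. For $b\ge2$, $P$ is realizable in $L$ if and only if $M$ is odd or $N<2^b$. In particular, there are arbitrarily large rectangular regions of $b$-invisible points whose boundary consists of $b$-visible points.
   Context: $L=\mathbb{N}\times\mathbb{N}$. For $r,s\in\mathbb{N}$, $\gcd_b(r,s)=\max\{k\in\mathbb{N} : k\mid r \text{ and } k^b\mid s\}$; $(r,s)$ is $b$-visible if $\gcd_b(r,s)=1$ and $b$-invisible otherwise. A $b$-pattern is obtained by choosing a positive integer $w$ and assigning to each $(r,s)\in L$ with $1\le r\le w$, $1\le s\le w^b$ a cross, a circle, or neither. It is realizable in $L$ if there is $(u,v)\in L$ such that $(u+r,v+s)$ is $b$-visible for every circle $(r,s)$ and $b$-invisible for every cross $(r,s)$. *)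

theory Defs
  imports Main
begin

text \<open>Natural numbers include 0 (so L = nat x nat). gcd_b(r,s) = max {k. k dvd r and k^b dvd s}.\<close>
definition gcd_b :: "nat \<Rightarrow> nat \<Rightarrow> nat \<Rightarrow> nat" where
  "gcd_b b r s = Max {k. k dvd r \<and> k ^ b dvd s}"

definition b_visible :: "nat \<Rightarrow> nat \<Rightarrow> nat \<Rightarrow> bool" where
  "b_visible b r s \<longleftrightarrow> gcd_b b r s = 1"

text \<open>A b-pattern: a size w > 0 together with disjoint sets of circles and crosses
  inside the box [1,w] x [1,w^b] (all other points are "neither").\<close>
definition is_b_pattern :: "nat \<Rightarrow> nat \<Rightarrow> (nat \<times> nat) set \<Rightarrow> (nat \<times> nat) set \<Rightarrow> bool" where
  "is_b_pattern b w circles crosses \<longleftrightarrow> 0 < w \<and> circles \<inter> crosses = {} \<and>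
     (\<forall>(r,s) \<in> circles \<union> crosses. 1 \<le> r \<and> r \<le> w \<and> 1 \<le> s \<and> s \<le> w ^ b)"

definition realizable :: "nat \<Rightarrow> (nat \<times> nat) set \<Rightarrow> (nat \<times> nat) set \<Rightarrow> bool" where
  "realizable b circles crosses \<longleftrightarrow>
     (\<exists>u v. (\<forall>(r,s) \<in> circles. b_visible b (u + r) (v + s)) \<and>
            (\<forall>(r,s) \<in> crosses. \<not> b_visible b (u + r) (v + s)))"

definition rect_boundary :: "nat \<Rightarrow> nat \<Rightarrow> (nat \<times> nat) set" where
  "rect_boundary M N = {(r,s). 1 \<le> r \<and> r \<le> M \<and> 1 \<le> s \<and> s \<le> N \<and>
                          (r = 1 \<or> r = M \<or> s = 1 \<or> s = N)}"

definition rect_interior :: "nat \<Rightarrow> nat \<Rightarrow> (nat \<times> nat) set" where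
  "rect_interior M N = {(r,s). 1 < r \<and> r < M \<and> 1 < s \<and> s < N}"

end

theory Submission
  imports Defs "HOL-Number_Theory.Number_Theory"
begin

lemma par1: "even (M::nat) \<Longrightarrow> even (u+1) \<or> even (u+M)" by auto
lemma par2: "even (u+1) \<or> even (u+(2::nat))" by auto
lemma md: "0 < (m::nat) \<Longrightarrow> m dvd v + (m - v mod m)"
proof -
  assume "0 < m"
  have "v mod m < m" using \<open>0<m\<close> by simp
  have "v + (m - v mod m) = (v div m) * m + m" using \<open>v mod m < m\<close>
    using div_mult_mod_eq[of v m] by linarith
  then show ?thesis by simp
qed

lemma gcdb_fin: "0 < r \<Longrightarrow> finite {k. k dvd r \<and> k ^ b dvd (s::nat)}"
  by (rule finite_subset[of _ "{..r}"]) (auto simp: dvd_imp_le)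

lemma invis:
  assumes "0 < r" "2 \<le> (p::nat)" "p dvd r" "p ^ b dvd s"
  shows "\<not> b_visible b r s"
proof -
  have "p \<le> gcd_b b r s" unfolding gcd_b_def
    using assms gcdb_fin[of r b s] by (intro Max_ge) auto
  then show ?thesis using assms unfolding b_visible_def by auto
qed

lemma vis:
  assumes "0 < r" "\<And>p. prime (p::nat) \<Longrightarrow> p dvd r \<Longrightarrow> \<not> p ^ b dvd s"
  shows "b_visible b r s"
proof -
  let ?S = "{k. k dvd r \<and> k ^ b dvd s}"
  have fin: "finite ?S" using gcdb_fin[OF assms(1)] .
  have ne: "1 \<in> ?S" by simp
  have mem: "gcd_b b r s \<in> ?S" unfolding gcd_b_def using fin ne by (intro Max_in) auto
  show ?thesis
  proof (rule ccontr)
    assume "\<not> b_visible b r s"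
    then have "gcd_b b r s \<noteq> 1" unfolding b_visible_def by simp
    then obtain p where p: "prime p" "p dvd gcd_b b r s" using prime_factor_nat by blast
    have "p dvd r" using mem p(2) dvd_trans by blast
    moreover have "p ^ b dvd s"
    proof -
      have "p ^ b dvd (gcd_b b r s) ^ b" using p(2) by (rule dvd_power_same)
      moreover have "(gcd_b b r s) ^ b dvd s" using mem by simp
      ultimately show ?thesis by (rule dvd_trans)
    qed
    ultimately show False using assms(2) p(1) by blast
  qed
qed

lemma neg1:
  assumes "2 \<le> M" "2 \<le> N" "even M" "2 ^ b \<le> N"
  shows "\<not> realizable b (rect_boundary M N) (rect_interior M N)"
proof
  assume "realizable b (rect_boundary M N) (rect_interior M N)"
  then obtain u v where uv: "\<forall>(r,s) \<in> rect_boundary M N. b_visible b (u + r) (v + s)"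
    unfolding realizable_def by blast
  obtain r0 where r0: "r0 = 1 \<or> r0 = M" "even (u + r0)" using par1[OF assms(3), of u]
    by blast
  define s where "s = 2 ^ b - v mod 2 ^ b"
  have "v mod 2 ^ b < 2 ^ b" by simp
  then have s1: "1 \<le> s" "s \<le> N" using assms(4) unfolding s_def by linarith+
  have "2 ^ b dvd v + s" unfolding s_def by (rule md) simp
  moreover have "(r0, s) \<in> rect_boundary M N" using r0 s1 assms unfolding rect_boundary_def by auto
  ultimately have "b_visible b (u + r0) (v + s)" using uv by blast
  moreover have "0 < u + r0" using r0 assms by auto
  ultimately show False using invis[of "u + r0" 2 b "v + s"] r0 \<open>2 ^ b dvd v + s\<close> by blast
qed

lemma neg2:
  assumes "2 \<le> M" "2 \<le> N" "even N"
  shows "\<not> realizable 1 (rect_boundary M N) (rect_interior M N)"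
proof
  assume "realizable 1 (rect_boundary M N) (rect_interior M N)"
  then obtain u v where uv: "\<forall>(r,s) \<in> rect_boundary M N. b_visible 1 (u + r) (v + s)"
    unfolding realizable_def by blast
  obtain s0 where s0: "s0 = 1 \<or> s0 = N" "even (v + s0)" using par1[OF assms(3), of v]
    by blast
  obtain r where r: "r = 1 \<or> r = 2" "even (u + r)"
    using par2[of u] by blast
  have "(r, s0) \<in> rect_boundary M N" using r s0 assms unfolding rect_boundary_def by auto
  then have "b_visible 1 (u + r) (v + s0)" using uv by blast
  moreover have "0 < u + r" using r by auto
  ultimately show False using invis[of "u + r" 2 1 "v + s0"] r s0 by simp
qed


definition nextp :: "nat \<Rightarrow> nat" where "nextp n = (SOME p. prime p \<and> n < p)"

lemma nextp: "prime (nextp n) \<and> n < nextp n"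
  unfolding nextp_def using someI_ex[OF bigger_prime[of n]] by blast

primrec pseq :: "nat \<Rightarrow> nat \<Rightarrow> nat" where
  "pseq B 0 = nextp B"
| "pseq B (Suc i) = nextp (pseq B i)"

lemma pseq_prime: "prime (pseq B i)"
  by (cases i) (simp_all add: nextp)

lemma pseq_gt: "B < pseq B i"
proof (induction i)
  case 0 then show ?case by (simp add: nextp)
next
  case (Suc i) then show ?case using nextp[of "pseq B i"] by simp
qed

lemma pseq_mono: "strict_mono (pseq B)"
  unfolding strict_mono_Suc_iff by (simp add: nextp)

lemma pseq_inj: "inj (pseq B)"
  using pseq_mono strict_mono_imp_inj_on by blast

lemma enc_inj: "s < N \<Longrightarrow> s' < N \<Longrightarrow> r * N + s = r' * N + (s'::nat) \<Longrightarrow> r = r' \<and> s = s'"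
proof -
  assume a: "s < N" "s' < N" "r * N + s = r' * N + s'"
  have "r = (r * N + s) div N" using a(1) by simp
  also have "\<dots> = (r' * N + s') div N" using a(3) by simp
  also have "\<dots> = r'" using a(2) by simp
  finally have 1: "r = r'" .
  have "s = (r * N + s) mod N" using a(1) by simp
  also have "\<dots> = (r' * N + s') mod N" using a(3) by simp
  also have "\<dots> = s'" using a(2) by simp
  finally show ?thesis using 1 by simp
qed

lemma dvd_two_close:
  assumes "(p::nat) dvd x + r" "p dvd x + r'" "r < p" "r' < p"
  shows "r = r'"
proof (rule ccontr)
  assume ne: "r \<noteq> r'"
  show False
  proof (cases "r < r'")
    case True
    have "p dvd (x + r') - (x + r)" using assms dvd_diff_nat by blast
    then have "p dvd r' - r" by simp
    moreover have "0 < r' - r" "r' - r < p" using True assms by auto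
    ultimately show False using dvd_imp_le by fastforce
  next
    case False
    then have "r' < r" using ne by simp
    have "p dvd (x + r) - (x + r')" using assms dvd_diff_nat by blast
    then have "p dvd r - r'" by simp
    moreover have "0 < r - r'" "r - r' < p" using \<open>r' < r\<close> assms by auto
    ultimately show False using dvd_imp_le by fastforce
  qed
qed

lemma dvd_sub_close:
  assumes "(m::nat) dvd (m - s) + s'" "s < m" "s' < m"
  shows "s = s'"
proof -
  have "m dvd (m - s) + s" using assms(2) by simp
  then show ?thesis using dvd_two_close[of m "m - s" s' s] assms by simp
qed


lemma pos:
  assumes b: "1 \<le> b" and M: "2 \<le> M" and N: "2 \<le> N"
    and C2: "odd M \<or> N < 2 ^ b" and C1: "b = 1 \<Longrightarrow> odd N"
  shows "realizable b (rect_boundary M N) (rect_interior M N)"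
proof -
  define I where "I = rect_interior M N"
  define Bd where "Bd = rect_boundary M N"
  define \<phi> where "\<phi> = (\<lambda>(r::nat,s::nat). pseq (M + N) (r * N + s))"
  have finI: "finite I"
    by (rule finite_subset[of _ "{..M} \<times> {..N}"]) (auto simp: I_def rect_interior_def)
  have phi_prime: "\<And>x. prime (\<phi> x)" unfolding \<phi>_def by (auto simp: pseq_prime split: prod.splits)
  have phi_big: "\<And>x. M + N < \<phi> x" unfolding \<phi>_def by (auto simp: pseq_gt split: prod.splits)
  have phi_inj: "\<And>r s r' s'. (r, s) \<in> I \<Longrightarrow> (r', s') \<in> I \<Longrightarrow> \<phi> (r, s) = \<phi> (r', s') \<Longrightarrow> r = r' \<and> s = s'"
  proof -
    fix r s r' s' assume a: "(r, s) \<in> I" "(r', s') \<in> I" "\<phi> (r, s) = \<phi> (r', s')"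
    then have "r * N + s = r' * N + s'" using pseq_inj unfolding \<phi>_def inj_def by auto
    moreover have "s < N" "s' < N" using a unfolding I_def rect_interior_def by auto
    ultimately show "r = r' \<and> s = s'" using enc_inj by blast
  qed
  have I_mem: "\<And>r s. (r, s) \<in> I \<longleftrightarrow> 1 < r \<and> r < M \<and> 1 < s \<and> s < N"
    unfolding I_def rect_interior_def by auto
  have Bd_mem: "\<And>r s. (r, s) \<in> Bd \<longleftrightarrow> 1 \<le> r \<and> r \<le> M \<and> 1 \<le> s \<and> s \<le> N \<and>
                          (r = 1 \<or> r = M \<or> s = 1 \<or> s = N)"
    unfolding Bd_def rect_boundary_def by auto
  define Small where "Small = {q::nat. prime q \<and> q ^ b \<le> N}"
  have small_le: "\<And>q. q \<in> Small \<Longrightarrow> q \<le> N"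
  proof -
    fix q assume "q \<in> Small"
    then have "prime q" "q ^ b \<le> N" unfolding Small_def by auto
    moreover have "q \<le> q ^ b" using b prime_gt_0_nat[OF \<open>prime q\<close>] by (intro self_le_power) auto
    ultimately show "q \<le> N" by linarith
  qed
  have finS: "finite Small" using small_le finite_subset[of Small "{..N}"] by auto
  define D where "D = \<phi> ` I \<union> Small"
  have finD: "finite D" unfolding D_def using finI finS by auto
  define GU where "GU = (\<lambda>p a. (\<forall>r s. (r, s) \<in> I \<longrightarrow> p = \<phi> (r, s) \<longrightarrow> p dvd a + r) \<and>
        (p \<in> Small \<longrightarrow> \<not> p dvd a + 1 \<and> \<not> p dvd a + M))"
  have exU: "\<forall>p\<in>D. \<exists>a. GU p a"
  proof
    fix p assume "p \<in> D"
    show "\<exists>a. GU p a"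
    proof (cases "p \<in> \<phi> ` I")
      case True
      then obtain r s where rs: "(r, s) \<in> I" "p = \<phi> (r, s)" by auto
      have "p \<notin> Small" using small_le phi_big[of "(r, s)"] rs by fastforce
      have "r < p" using rs I_mem phi_big[of "(r, s)"] by auto
      have "GU p (p - r)" unfolding GU_def
      proof (intro conjI allI impI)
        fix r' s' assume "(r', s') \<in> I" "p = \<phi> (r', s')"
        then have "r' = r" using phi_inj rs by metis
        then show "p dvd p - r + r'" using \<open>r < p\<close> by simp
      qed (use \<open>p \<notin> Small\<close> in auto)
      then show ?thesis by blast
    next
      case False
      then have pS: "p \<in> Small" using \<open>p \<in> D\<close> D_def by auto
      then have pp: "prime p" "p ^ b \<le> N" unfolding Small_def by auto
      then have p2: "2 \<le> p" using prime_ge_2_nat by blast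
      show ?thesis
      proof (cases "p dvd M")
        case True
        have "p \<noteq> 2"
        proof
          assume "p = 2"
          then have "N < 2 ^ b" using C2 True by auto
          then show False using pp \<open>p = 2\<close> by simp
        qed
        then have p3: "3 \<le> p" using p2 by linarith
        have "\<not> p dvd 1 + 1" using p3 by (auto dest: dvd_imp_le)
        moreover have "\<not> p dvd 1 + M"
        proof
          assume "p dvd 1 + M"
          then have "p dvd (1 + M) - M" using True by (rule dvd_diff_nat)
          then have "p dvd 1" by simp
          then show False using p2 by simp
        qed
        ultimately have "GU p 1" unfolding GU_def using False by auto
        then show ?thesis by blast
      next
        case False
        have "\<not> p dvd 0 + 1" using p2 by simp
        then have "GU p 0" unfolding GU_def using False \<open>p \<notin> \<phi> ` I\<close> by auto
        then show ?thesis by blast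
      qed
    qed
  qed
  define aU where "aU = (\<lambda>p. SOME a. GU p a)"
  have GUa: "\<And>p. p \<in> D \<Longrightarrow> GU p (aU p)" unfolding aU_def using exU someI_ex by metis
  have primeD: "\<And>p. p \<in> D \<Longrightarrow> prime p" unfolding D_def Small_def using phi_prime by auto
  have copD: "\<forall>i\<in>D. \<forall>j\<in>D. i \<noteq> j \<longrightarrow> coprime (id i) (id j)"
    by (auto intro!: primes_coprime primeD)
  obtain u where u: "\<forall>p\<in>D. [u = aU p] (mod id p)"
    using chinese_remainder_nat[OF finD copD] by blast
  have u_dvd: "\<And>p t. p \<in> D \<Longrightarrow> p dvd u + t \<longleftrightarrow> p dvd aU p + t"
  proof -
    fix p t assume "p \<in> D"
    then have "[u = aU p] (mod p)" using u by simp
    then have "[u + t = aU p + t] (mod p)" by (rule cong_add) (rule cong_refl)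
    then show "p dvd u + t \<longleftrightarrow> p dvd aU p + t" using cong_dvd_iff by blast
  qed
  have u_int: "\<And>r s. (r, s) \<in> I \<Longrightarrow> \<phi> (r, s) dvd u + r"
  proof -
    fix r s assume rs: "(r, s) \<in> I"
    then have "\<phi> (r, s) \<in> D" unfolding D_def by auto
    then show "\<phi> (r, s) dvd u + r" using u_dvd GUa rs unfolding GU_def by blast
  qed
  have u_small: "\<And>q. q \<in> Small \<Longrightarrow> \<not> q dvd u + 1 \<and> \<not> q dvd u + M"
  proof -
    fix q assume q: "q \<in> Small"
    then have "q \<in> D" unfolding D_def by auto
    then show "\<not> q dvd u + 1 \<and> \<not> q dvd u + M" using u_dvd GUa q unfolding GU_def by blast
  qed
  define P where "P = {p::nat. prime p \<and> (\<exists>r\<in>{1..M}. p dvd u + r)}"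
  have finP: "finite P"
  proof (rule finite_subset[of _ "{..u + M}"])
    show "P \<subseteq> {..u + M}"
    proof
      fix p assume "p \<in> P"
      then obtain r where r: "1 \<le> r" "r \<le> M" "p dvd u + r" unfolding P_def by auto
      then have "p \<le> u + r" by (intro dvd_imp_le) auto
      then show "p \<in> {..u + M}" using r by auto
    qed
  qed simp
  define GV where "GV = (\<lambda>p c. (\<forall>r s. (r, s) \<in> Bd \<longrightarrow> p dvd u + r \<longrightarrow> \<not> p ^ b dvd c + s) \<and>
        (\<forall>r s. (r, s) \<in> I \<longrightarrow> p = \<phi> (r, s) \<longrightarrow> p ^ b dvd c + s))"
  have exV: "\<forall>p\<in>P. \<exists>c. GV p c"
  proof
    fix p assume pP: "p \<in> P"
    then have pp: "prime p" unfolding P_def by auto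
    then have p2: "2 \<le> p" using prime_ge_2_nat by blast
    have pb_ge: "p \<le> p ^ b" using b p2 by (intro self_le_power) auto
    show "\<exists>c. GV p c"
    proof (cases "p \<in> \<phi> ` I")
      case True
      then obtain r s where rs: "(r, s) \<in> I" "p = \<phi> (r, s)" by auto
      have big: "M + N < p" using rs phi_big by simp
      have sp: "s < p ^ b" using rs I_mem big pb_ge by auto
      have "GV p (p ^ b - s)" unfolding GV_def
      proof (intro conjI allI impI)
        fix r' s' assume a: "(r', s') \<in> Bd" "p dvd u + r'"
        have "p dvd u + r" using u_int rs by simp
        moreover have "r' < p" "r < p" using a(1) Bd_mem rs I_mem big by auto
        ultimately have "r' = r" using dvd_two_close[of p u r' r] a(2) by blast
        then have "s' = 1 \<or> s' = N" using a(1) Bd_mem rs I_mem by auto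
        then have "s' \<noteq> s" "s' < p ^ b" using rs I_mem big pb_ge by auto
        then show "\<not> p ^ b dvd p ^ b - s + s'" using dvd_sub_close sp by blast
      next
        fix r' s' assume a: "(r', s') \<in> I" "p = \<phi> (r', s')"
        then have "s' = s" using phi_inj rs by metis
        then show "p ^ b dvd p ^ b - s + s'" using sp by simp
      qed
      then show ?thesis by blast
    next
      case False
      define c where "c = (if p ^ b dvd N then 1 else (0::nat))"
      have "GV p c" unfolding GV_def
      proof (intro conjI allI impI)
        fix r s assume a: "(r, s) \<in> Bd" "p dvd u + r"
        show "\<not> p ^ b dvd c + s"
        proof (cases "r = 1 \<or> r = M")
          case True
          then have "p \<notin> Small" using u_small a(2) by auto
          then have NP: "N < p ^ b" using pp unfolding Small_def by auto
          then have "\<not> p ^ b dvd N" using N by (auto dest: dvd_imp_le)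
          then have "c = 0" unfolding c_def by simp
          moreover have "1 \<le> s" "s < p ^ b" using a(1) Bd_mem NP by auto
          ultimately show ?thesis by (auto dest: dvd_imp_le)
        next
          case False
          then have s1N: "s = 1 \<or> s = N" using a(1) Bd_mem by auto
          show ?thesis
          proof (cases "p ^ b dvd N")
            case True
            then have c1: "c = 1" unfolding c_def by simp
            have pb3: "3 \<le> p ^ b"
            proof (rule ccontr)
              assume "\<not> 3 \<le> p ^ b"
              then have pb2: "p ^ b \<le> 2" by simp
              with p2 pb_ge have "p = 2" by simp
              have "b = 1"
              proof (rule ccontr)
                assume "b \<noteq> 1"
                then have "2 \<le> b" using b by simp
                then have "(2::nat) ^ 2 \<le> 2 ^ b" by (rule power_increasing) simp
                then show False using pb2 \<open>p = 2\<close> by simp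
              qed
              then have "odd N" using C1 by simp
              then show False using True \<open>p = 2\<close> \<open>b = 1\<close> by simp
            qed
            show ?thesis
            proof
              assume d: "p ^ b dvd c + s"
              from s1N show False
              proof
                assume "s = 1"
                then have "p ^ b dvd Suc (Suc 0)" using d c1 by simp
                then show False using pb3 by (auto dest: dvd_imp_le)
              next
                assume "s = N"
                then have "p ^ b dvd N + 1" using d c1 by (simp add: add.commute)
                then have "p ^ b dvd (N + 1) - N" using True by (rule dvd_diff_nat)
                then have "p ^ b dvd 1" by simp
                then show False using pb_ge p2 by simp
              qed
            qed
          next
            case False
            then have c0: "c = 0" unfolding c_def by simp
            show ?thesis
            proof
              assume d: "p ^ b dvd c + s"
              from s1N show False
              proof
                assume "s = 1"
                then have "p ^ b dvd 1" using d c0 by simp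
                then show False using pb_ge p2 by simp
              next
                assume "s = N"
                then show False using d c0 False by simp
              qed
            qed
          qed
        qed
      next
        fix r s assume "(r, s) \<in> I" "p = \<phi> (r, s)"
        then show "p ^ b dvd c + s" using False by auto
      qed
      then show ?thesis by blast
    qed
  qed
  define cV where "cV = (\<lambda>p. SOME c. GV p c)"
  have GVc: "\<And>p. p \<in> P \<Longrightarrow> GV p (cV p)" unfolding cV_def using exV someI_ex by metis
  have primeP: "\<And>p. p \<in> P \<Longrightarrow> prime p" unfolding P_def by auto
  have copP: "\<forall>i\<in>P. \<forall>j\<in>P. i \<noteq> j \<longrightarrow> coprime ((\<lambda>p. p ^ b) i) ((\<lambda>p. p ^ b) j)"
  proof (intro ballI impI)
    fix i j assume ij: "i \<in> P" "j \<in> P" "i \<noteq> j"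
    have "coprime i j" using primes_coprime[OF primeP[OF ij(1)] primeP[OF ij(2)] ij(3)] .
    then show "coprime ((\<lambda>p. p ^ b) i) ((\<lambda>p. p ^ b) j)" by simp
  qed
  obtain v where v: "\<forall>p\<in>P. [v = cV p] (mod (\<lambda>p. p ^ b) p)"
    using chinese_remainder_nat[OF finP copP] by blast
  have v_dvd: "\<And>p t. p \<in> P \<Longrightarrow> p ^ b dvd v + t \<longleftrightarrow> p ^ b dvd cV p + t"
  proof -
    fix p t assume "p \<in> P"
    then have "[v = cV p] (mod p ^ b)" using v by simp
    then have "[v + t = cV p + t] (mod p ^ b)" by (rule cong_add) (rule cong_refl)
    then show "p ^ b dvd v + t \<longleftrightarrow> p ^ b dvd cV p + t" using cong_dvd_iff by blast
  qed
  have bd: "b_visible b (u + r) (v + s)" if "(r, s) \<in> rect_boundary M N" for r s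
  proof -
    have rsB: "(r, s) \<in> Bd" using that by (simp add: Bd_def)
    then have r: "1 \<le> r" "r \<le> M" using Bd_mem by auto
    show "b_visible b (u + r) (v + s)"
    proof (rule vis)
      show "0 < u + r" using r by simp
    next
      fix p assume "prime p" "p dvd u + r"
      then have "p \<in> P" unfolding P_def using r by auto
      then show "\<not> p ^ b dvd v + s" using v_dvd GVc rsB \<open>p dvd u + r\<close> unfolding GV_def by blast
    qed
  qed
  have inn: "\<not> b_visible b (u + r) (v + s)" if "(r, s) \<in> rect_interior M N" for r s
  proof -
    have rsI: "(r, s) \<in> I" using that by (simp add: I_def)
    then have r: "1 \<le> r" "r \<le> M" using I_mem by auto
    have d1: "\<phi> (r, s) dvd u + r" using u_int rsI .
    then have "\<phi> (r, s) \<in> P" unfolding P_def using phi_prime r by auto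
    then have "\<phi> (r, s) ^ b dvd v + s" using v_dvd GVc rsI unfolding GV_def by blast
    moreover have "2 \<le> \<phi> (r, s)" using phi_prime prime_ge_2_nat by blast
    moreover have "0 < u + r" using r by simp
    ultimately show ?thesis using invis[of "u + r" "\<phi> (r, s)" b "v + s"] d1 by blast
  qed
  have "(\<forall>(r, s) \<in> rect_boundary M N. b_visible b (u + r) (v + s)) \<and>
            (\<forall>(r, s) \<in> rect_interior M N. \<not> b_visible b (u + r) (v + s))"
    using bd inn by auto
  then show ?thesis unfolding realizable_def by blast
qed


theorem mainTheorem9:
  fixes b M N :: nat
  assumes "1 \<le> b" and "2 \<le> M" and "2 \<le> N"
  shows "(\<exists>w. is_b_pattern b w (rect_boundary M N) (rect_interior M N))
    \<and> (b = 1 \<longrightarrow> (realizable b (rect_boundary M N) (rect_interior M N) \<longleftrightarrow> odd M \<and> odd N))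
    \<and> (2 \<le> b \<longrightarrow> (realizable b (rect_boundary M N) (rect_interior M N) \<longleftrightarrow> odd M \<or> N < 2 ^ b))
    \<and> (\<forall>K. \<exists>M' N'. K \<le> M' \<and> K \<le> N' \<and> 2 \<le> M' \<and> 2 \<le> N' \<and>
           realizable b (rect_boundary M' N') (rect_interior M' N'))"
proof -
  have p1: "\<exists>w. is_b_pattern b w (rect_boundary M N) (rect_interior M N)"
  proof (intro exI[of _ "M + N"])
    have "M + N \<le> (M + N) ^ b" using assms by (intro self_le_power) auto
    then show "is_b_pattern b (M + N) (rect_boundary M N) (rect_interior M N)"
      unfolding is_b_pattern_def rect_boundary_def rect_interior_def using assms by auto
  qed
  have p2: "b = 1 \<longrightarrow> (realizable b (rect_boundary M N) (rect_interior M N) \<longleftrightarrow> odd M \<and> odd N)"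
  proof
    assume b1: "b = 1"
    show "realizable b (rect_boundary M N) (rect_interior M N) \<longleftrightarrow> odd M \<and> odd N"
    proof
      assume R: "realizable b (rect_boundary M N) (rect_interior M N)"
      show "odd M \<and> odd N"
      proof (rule ccontr)
        assume "\<not> (odd M \<and> odd N)"
        then consider "even M" | "even N" by blast
        then show False
        proof cases
          case 1
          have "2 ^ b \<le> N" using b1 assms(3) by simp
          then show False using neg1[OF assms(2,3) 1] R by simp
        next
          case 2
          then show False using neg2[OF assms(2,3) 2] R b1 by simp
        qed
      qed
    next
      assume "odd M \<and> odd N"
      then show "realizable b (rect_boundary M N) (rect_interior M N)"
        using pos[OF assms] b1 by simp
    qed
  qed
  have p3: "2 \<le> b \<longrightarrow> (realizable b (rect_boundary M N) (rect_interior M N) \<longleftrightarrow> odd M \<or> N < 2 ^ b)"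
  proof
    assume b2: "2 \<le> b"
    show "realizable b (rect_boundary M N) (rect_interior M N) \<longleftrightarrow> odd M \<or> N < 2 ^ b"
    proof
      assume R: "realizable b (rect_boundary M N) (rect_interior M N)"
      show "odd M \<or> N < 2 ^ b"
      proof (rule ccontr)
        assume "\<not> (odd M \<or> N < 2 ^ b)"
        then have "even M" "2 ^ b \<le> N" by auto
        then show False using neg1[OF assms(2,3)] R by simp
      qed
    next
      assume "odd M \<or> N < 2 ^ b"
      then show "realizable b (rect_boundary M N) (rect_interior M N)"
        using pos[OF assms] b2 by simp
    qed
  qed
  have p4: "\<forall>K. \<exists>M' N'. K \<le> M' \<and> K \<le> N' \<and> 2 \<le> M' \<and> 2 \<le> N' \<and>
           realizable b (rect_boundary M' N') (rect_interior M' N')"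
  proof
    fix K :: nat
    have "realizable b (rect_boundary (2 * K + 3) (2 * K + 3)) (rect_interior (2 * K + 3) (2 * K + 3))"
      using assms(1) by (intro pos) auto
    then show "\<exists>M' N'. K \<le> M' \<and> K \<le> N' \<and> 2 \<le> M' \<and> 2 \<le> N' \<and>
           realizable b (rect_boundary M' N') (rect_interior M' N')"
      by (intro exI[of _ "2 * K + 3"]) auto
  qed
  show ?thesis using p1 p2 p3 p4 by blast
qed

end
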